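(* Suppose $G$ is connected and $\Gamma_G$ is population monotonic. Then (a) any two triangles (subgraphs isomorphic to $K_3$) of $G$ that share at least one vertex share a common edge, and this common edge is the strictly maximum-weight edge of each of the two triangles; and (b) any two triangles of $G$ share at least one vertex, and in fact there is a single edge $uv$ of $G$ contained in every triangle of $G$ which is the maximum-weight edge of every triangle of $G$.
   Context: $G=(V,E;w)$ is a finite simple graph with edge weights $w:E\to\mathbb{R}$, $w_e>0$ for all $e\in E$. The matching game on $G$ is the cooperative game $\Gamma_G=(N,\gamma)$ with player set $N=V$ and, for $S\subseteq N$, $\gamma(S)$ equal to the maximum weight of a matching in the induced subgraph $G[S]$ (so $\gamma(\emptyset)=0$). A population monotonic allocation scheme (PMAS) is a family $(\boldsymbol{x}_S)_{\emptyset\neq S\subseteq N}$ with $\boldsymbol{x}_S=(x_{S,i})_{i\in S}\in\mathbb{R}^S$ such that (efficiency) $\sum_{i\in S}x_{S,i}=\gamma(S)$ for every nonempty $S\subseteq N$, and (monotonicity) $x_{S,i}\le x_{T,i}$ whenever $\emptyset\ne S\subseteq T\subseteq N$ and $i\in S$. $\Gamma_G$ is called population monotonic if it admits a PMAS. *)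

theory Defs
  imports Complex_Main
begin

definition simple_graph :: "'a set \<Rightarrow> 'a set set \<Rightarrow> bool" where
  "simple_graph V E \<longleftrightarrow> finite V \<and> (\<forall>e\<in>E. e \<subseteq> V \<and> card e = 2)"

definition adj :: "'a set set \<Rightarrow> ('a \<times> 'a) set" where
  "adj E = {(u, v). {u, v} \<in> E}"

definition connected_graph :: "'a set \<Rightarrow> 'a set set \<Rightarrow> bool" where
  "connected_graph V E \<longleftrightarrow> (\<forall>u\<in>V. \<forall>v\<in>V. (u, v) \<in> (adj E)\<^sup>*)"

definition matching_in :: "'a set set \<Rightarrow> 'a set \<Rightarrow> 'a set set \<Rightarrow> bool" where
  "matching_in E S M \<longleftrightarrow> M \<subseteq> E \<and> (\<forall>e\<in>M. e \<subseteq> S)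
     \<and> (\<forall>e1\<in>M. \<forall>e2\<in>M. e1 \<noteq> e2 \<longrightarrow> e1 \<inter> e2 = {})"

definition gamma :: "'a set set \<Rightarrow> ('a set \<Rightarrow> real) \<Rightarrow> 'a set \<Rightarrow> real" where
  "gamma E w S = Max ((\<lambda>M. \<Sum>e\<in>M. w e) ` {M. matching_in E S M})"

definition is_PMAS :: "'a set \<Rightarrow> 'a set set \<Rightarrow> ('a set \<Rightarrow> real) \<Rightarrow> ('a set \<Rightarrow> 'a \<Rightarrow> real) \<Rightarrow> bool" where
  "is_PMAS V E w x \<longleftrightarrow>
     (\<forall>S. S \<subseteq> V \<and> S \<noteq> {} \<longrightarrow> (\<Sum>i\<in>S. x S i) = gamma E w S) \<and>
     (\<forall>S T i. S \<noteq> {} \<and> S \<subseteq> T \<and> T \<subseteq> V \<and> i \<in> S \<longrightarrow> x S i \<le> x T i)"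

definition population_monotonic :: "'a set \<Rightarrow> 'a set set \<Rightarrow> ('a set \<Rightarrow> real) \<Rightarrow> bool" where
  "population_monotonic V E w \<longleftrightarrow> (\<exists>x. is_PMAS V E w x)"

definition triangle :: "'a set \<Rightarrow> 'a set set \<Rightarrow> 'a set \<Rightarrow> bool" where
  "triangle V E t \<longleftrightarrow> t \<subseteq> V \<and> card t = 3 \<and> (\<forall>u\<in>t. \<forall>v\<in>t. u \<noteq> v \<longrightarrow> {u, v} \<in> E)"

definition strict_max_edge :: "'a set \<Rightarrow> ('a set \<Rightarrow> real) \<Rightarrow> 'a set \<Rightarrow> bool" where
  "strict_max_edge t w e \<longleftrightarrow> e \<subseteq> t \<and> card e = 2 \<and>
     (\<forall>f. f \<subseteq> t \<and> card f = 2 \<and> f \<noteq> e \<longrightarrow> w f < w e)"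

end

theory Submission imports Defs begin

locale pm =
  fixes V :: "'a set" and E :: "'a set set" and w :: "'a set \<Rightarrow> real" and x :: "'a set \<Rightarrow> 'a \<Rightarrow> real"
  assumes sg: "simple_graph V E" and pos: "\<forall>e\<in>E. w e > 0" and pmas: "is_PMAS V E w x"
begin

abbreviation ed :: "'a \<Rightarrow> 'a \<Rightarrow> bool" where "ed u v \<equiv> {u,v} \<in> E"
abbreviation W :: "'a \<Rightarrow> 'a \<Rightarrow> real" where "W u v \<equiv> w {u,v}"
abbreviation s :: "'a \<Rightarrow> 'a \<Rightarrow> real" where "s u v \<equiv> x {u,v} u"

lemma finV: "finite V" using sg by (simp add: simple_graph_def)

lemma finE: "finite E"
proof -
  have "E \<subseteq> Pow V" using sg by (auto simp: simple_graph_def)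
  thus ?thesis using finV by (meson finite_Pow_iff finite_subset)
qed

lemma edge: assumes "ed u v" shows "u \<noteq> v \<and> u \<in> V \<and> v \<in> V \<and> W u v > 0"
proof -
  have c: "card {u,v} = 2" and sub: "{u,v} \<subseteq> V" using sg assms unfolding simple_graph_def by auto
  have "u \<noteq> v" proof assume "u = v" thus False using c by simp qed
  thus ?thesis using sub pos assms by auto
qed

lemma pair_sym: "{u,v} = {v,u}" by blast
lemma ed_sym: "ed u v \<Longrightarrow> ed v u" by (simp only: pair_sym)
lemma W_sym: "W u v = W v u" by (simp only: pair_sym)

lemma fin_match: "finite {M. matching_in E S M}"
  by (rule finite_subset[of _ "Pow E"]) (auto simp: matching_in_def finE)

lemma gamma_ge: "matching_in E S M \<Longrightarrow> (\<Sum>e\<in>M. w e) \<le> gamma E w S"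
  unfolding gamma_def by (rule Max_ge) (auto simp: fin_match)

lemma gamma_le: assumes "\<And>M. matching_in E S M \<Longrightarrow> (\<Sum>e\<in>M. w e) \<le> B" shows "gamma E w S \<le> B"
proof -
  have ne: "{} \<in> {M. matching_in E S M}" by (simp add: matching_in_def)
  show ?thesis unfolding gamma_def using assms fin_match[of S] ne by (subst Max_le_iff) auto
qed

lemma match_small:
  assumes m: "matching_in E S M" and f: "finite S" and c: "card S \<le> 3"
  shows "M = {} \<or> (\<exists>e. M = {e} \<and> e \<in> E \<and> e \<subseteq> S)"
proof (cases "M = {}")
  case False
  then obtain e where e: "e \<in> M" by blast
  have "M = {e}"
  proof (rule ccontr)
    assume "M \<noteq> {e}"
    then obtain e' where e': "e' \<in> M" "e' \<noteq> e" using e by blast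
    have d: "e \<inter> e' = {}" using m e e' unfolding matching_in_def by blast
    have c2: "card e = 2" "card e' = 2" using m e e' sg unfolding matching_in_def simple_graph_def by auto
    have sub: "e \<subseteq> S" "e' \<subseteq> S" using m e e' unfolding matching_in_def by auto
    hence fe: "finite e" "finite e'" using f finite_subset by auto
    have "card (e \<union> e') = 4" using card_Un_disjoint[OF fe d] c2 by simp
    moreover have "card (e \<union> e') \<le> card S" using sub f by (intro card_mono) auto
    ultimately show False using c by simp
  qed
  thus ?thesis using m e unfolding matching_in_def by auto
qed simp

lemma card3: "card {a,b,c} \<le> 3"
  by (simp add: card_insert_if)

lemma gamma3_le:
  assumes "0 \<le> B" "\<And>e. e \<in> E \<Longrightarrow> e \<subseteq> {a,b,c} \<Longrightarrow> w e \<le> B"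
  shows "gamma E w {a,b,c} \<le> B"
proof (rule gamma_le)
  fix M assume "matching_in E {a,b,c} M"
  from match_small[OF this _ card3] show "(\<Sum>e\<in>M. w e) \<le> B" using assms by auto
qed


lemma gamma1: "gamma E w {u} = 0"
proof (rule antisym)
  show "gamma E w {u} \<le> 0"
  proof (rule gamma_le)
    fix M assume m: "matching_in E {u} M"
    have "M = {}"
    proof (rule ccontr)
      assume "M \<noteq> {}" then obtain e where "e \<in> M" by blast
      hence "e \<subseteq> {u}" "card e = 2" using m sg unfolding matching_in_def simple_graph_def by auto
      thus False using card_mono[of "{u}" e] by simp
    qed
    thus "(\<Sum>e\<in>M. w e) \<le> 0" by simp
  qed
  show "0 \<le> gamma E w {u}" using gamma_ge[of "{u}" "{}"] by (simp add: matching_in_def)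
qed

lemma gamma2: assumes "ed u v" shows "gamma E w {u,v} = W u v"
proof (rule antisym)
  show "gamma E w {u,v} \<le> W u v"
  proof (rule gamma_le)
    fix M assume m: "matching_in E {u,v} M"
    have c: "card {u,v} \<le> 3" using card3[of u u v] by simp
    have fin: "finite {u,v}" by simp
    from match_small[OF m fin c] show "(\<Sum>e\<in>M. w e) \<le> W u v"
    proof
      assume "M = {}" thus ?thesis using edge[OF assms] by simp
    next
      assume "\<exists>e. M = {e} \<and> e \<in> E \<and> e \<subseteq> {u,v}"
      then obtain e where e: "M = {e}" "e \<in> E" "e \<subseteq> {u,v}" by blast
      have "card e = 2" using e sg by (auto simp: simple_graph_def)
      moreover have "card {u,v} = 2" using edge[OF assms] by simp
      ultimately have "e = {u,v}" using e by (intro card_subset_eq) auto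
      thus ?thesis using e by simp
    qed
  qed
  show "W u v \<le> gamma E w {u,v}" using gamma_ge[of "{u,v}" "{{u,v}}"] assms by (simp add: matching_in_def)
qed

lemma two_subsets: assumes "f \<subseteq> {a,b,c}" "card f = 2" shows "f = {a,b} \<or> f = {a,c} \<or> f = {b,c}"
proof -
  obtain p q where f: "f = {p,q}" "p \<noteq> q" using assms(2) by (meson card_2_iff)
  have "p \<in> {a,b,c}" "q \<in> {a,b,c}" using assms(1) f by simp_all
  hence "p = a \<or> p = b \<or> p = c" "q = a \<or> q = b \<or> q = c" by simp_all
  thus ?thesis using f by (elim disjE; simp add: insert_commute)
qed

lemma eff: "S \<subseteq> V \<Longrightarrow> S \<noteq> {} \<Longrightarrow> (\<Sum>i\<in>S. x S i) = gamma E w S"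
  using pmas by (simp add: is_PMAS_def)
lemma mono: "S \<noteq> {} \<Longrightarrow> S \<subseteq> T \<Longrightarrow> T \<subseteq> V \<Longrightarrow> i \<in> S \<Longrightarrow> x S i \<le> x T i"
  using pmas by (simp add: is_PMAS_def)

lemma x_single: "u \<in> V \<Longrightarrow> x {u} u = 0"
  using eff[of "{u}"] gamma1[of u] by simp

lemma x_nn: "T \<subseteq> V \<Longrightarrow> a \<in> T \<Longrightarrow> 0 \<le> x T a"
  using mono[of "{a}" T a] x_single[of a] by auto

lemma s_le: "ed u v \<Longrightarrow> T \<subseteq> V \<Longrightarrow> u \<in> T \<Longrightarrow> v \<in> T \<Longrightarrow> s u v \<le> x T u"
  by (rule mono) auto

lemma s_nn: "ed u v \<Longrightarrow> 0 \<le> s u v"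
  using edge[of u v] by (intro x_nn) auto

lemma s_sum: assumes "ed u v" shows "s u v + s v u = W u v"
proof -
  have e: "u \<noteq> v" "u \<in> V" "v \<in> V" using edge[OF assms] by auto
  have "(\<Sum>i\<in>{u,v}. x {u,v} i) = gamma E w {u,v}" using e by (intro eff) auto
  hence "x {u,v} u + x {u,v} v = W u v" using e gamma2[OF assms] by simp
  moreover have "x {u,v} v = s v u" by (simp only: pair_sym[of u v])
  ultimately show ?thesis by simp
qed

lemma sum3: assumes "a \<noteq> b" "a \<noteq> c" "b \<noteq> c" "a \<in> V" "b \<in> V" "c \<in> V"
  shows "x {a,b,c} a + x {a,b,c} b + x {a,b,c} c = gamma E w {a,b,c}"
  using eff[of "{a,b,c}"] assms by (simp add: add.assoc)

lemma tri_max: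
  assumes uv: "ed u v" and uz: "ed u z" and vz: "ed v z"
    and m1: "W u z \<le> W u v" and m2: "W v z \<le> W u v"
  shows "s z u = 0 \<and> s z v = 0 \<and> s u v \<ge> W u z \<and> s v u \<ge> W v z \<and> W u z < W u v \<and> W v z < W u v"
proof -
  have e1: "u \<noteq> v" "u \<in> V" "v \<in> V" "W u v > 0" using edge[OF uv] by auto
  have e2: "u \<noteq> z" "z \<in> V" "W u z > 0" using edge[OF uz] by auto
  have e3: "v \<noteq> z" "W v z > 0" using edge[OF vz] by auto
  let ?T = "{u,v,z}"
  have TV: "?T \<subseteq> V" using e1 e2 by auto
  have g: "gamma E w ?T \<le> W u v"
  proof (rule gamma3_le)
    show "0 \<le> W u v" using e1 by simp
    fix e assume "e \<in> E" "e \<subseteq> ?T"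
    moreover hence "card e = 2" using sg by (auto simp: simple_graph_def)
    ultimately have "e = {u,v} \<or> e = {u,z} \<or> e = {v,z}" using two_subsets[of e u v z] by blast
    thus "w e \<le> W u v" using m1 m2 by auto
  qed
  have sm: "x ?T u + x ?T v + x ?T z = gamma E w ?T" using sum3[of u v z] e1 e2 e3 by auto
  have l1: "s u v \<le> x ?T u" using s_le[OF uv TV] by auto
  have l2: "s u z \<le> x ?T u" using s_le[OF uz TV] by auto
  have l3: "s v u \<le> x ?T v" using s_le[OF ed_sym[OF uv] TV] by auto
  have l4: "s v z \<le> x ?T v" using s_le[OF vz TV] by auto
  have l5: "s z u \<le> x ?T z" using s_le[OF ed_sym[OF uz] TV] by auto
  have l6: "s z v \<le> x ?T z" using s_le[OF ed_sym[OF vz] TV] by auto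
  have n5: "0 \<le> s z u" using s_nn[OF ed_sym[OF uz]] .
  have n6: "0 \<le> s z v" using s_nn[OF ed_sym[OF vz]] .
  have p1: "s u v + s v u = W u v" using s_sum[OF uv] .
  have p2: "s u z + s z u = W u z" using s_sum[OF uz] .
  have p3: "s v z + s z v = W v z" using s_sum[OF vz] .
  show ?thesis using g sm l1 l2 l3 l4 l5 l6 n5 n6 p1 p2 p3 e1 e2 e3 by linarith
qed

lemma path:
  assumes cp: "ed c p" and cq: "ed c q" and npq: "\<not> ed p q" and pq: "p \<noteq> q"
  shows "s p c + W c q \<le> max (W c p) (W c q) \<and> s q c + W c p \<le> max (W c p) (W c q)"
proof -
  have e1: "c \<noteq> p" "c \<in> V" "p \<in> V" using edge[OF cp] by auto
  have e2: "c \<noteq> q" "q \<in> V" using edge[OF cq] by auto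
  let ?T = "{p,c,q}"
  have TV: "?T \<subseteq> V" using e1 e2 by auto
  have g: "gamma E w ?T \<le> max (W c p) (W c q)"
  proof (rule gamma3_le)
    show "0 \<le> max (W c p) (W c q)" using edge[OF cp] by (auto simp: le_max_iff_disj)
    fix e assume "e \<in> E" "e \<subseteq> ?T"
    moreover hence "card e = 2" using sg by (auto simp: simple_graph_def)
    ultimately have "e = {p,c} \<or> e = {p,q} \<or> e = {c,q}" using two_subsets[of e p c q] by blast
    moreover have "e \<noteq> {p,q}" using npq \<open>e \<in> E\<close> by auto
    moreover have "W p c = W c p" by (rule W_sym)
    ultimately show "w e \<le> max (W c p) (W c q)" by (auto simp: le_max_iff_disj)
  qed
  have sm: "x ?T p + x ?T c + x ?T q = gamma E w ?T" using sum3[of p c q] e1 e2 pq by auto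
  have l1: "s p c \<le> x ?T p" using s_le[OF ed_sym[OF cp] TV] by auto
  have l2: "s c q \<le> x ?T c" using s_le[OF cq TV] by auto
  have l3: "s c p \<le> x ?T c" using s_le[OF cp TV] by auto
  have l4: "s q c \<le> x ?T q" using s_le[OF ed_sym[OF cq] TV] by auto
  have p1: "s c p + s p c = W c p" using s_sum[OF cp] .
  have p2: "s c q + s q c = W c q" using s_sum[OF cq] .
  show ?thesis using g sm l1 l2 l3 l4 p1 p2 by linarith
qed


lemma path':
  assumes cp: "ed c p" and cq: "ed c q" and npq: "\<not> ed p q" and pq: "p \<noteq> q"
  shows "(s p c + W c q \<le> W c p \<and> s q c + W c p \<le> W c p) \<or> (s p c + W c q \<le> W c q \<and> s q c + W c p \<le> W c q)"
  using path[OF assms] by (cases "W c p \<le> W c q") (auto simp: max_def)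

lemma tri3:
  assumes ab: "ed a b" and ac: "ed a c" and bc: "ed b c"
  shows "(s c a = 0 \<and> s c b = 0 \<and> s a b \<ge> W a c \<and> s b a \<ge> W b c \<and> W a c < W a b \<and> W b c < W a b)
       \<or> (s b a = 0 \<and> s b c = 0 \<and> s a c \<ge> W a b \<and> s c a \<ge> W b c \<and> W a b < W a c \<and> W b c < W a c)
       \<or> (s a b = 0 \<and> s a c = 0 \<and> s b c \<ge> W a b \<and> s c b \<ge> W a c \<and> W a b < W b c \<and> W a c < W b c)"
proof -
  have S: "W c b = W b c" "W b a = W a b" "W c a = W a c" by (simp_all only: W_sym)
  consider (1) "W a c \<le> W a b \<and> W b c \<le> W a b" | (2) "W a b \<le> W a c \<and> W b c \<le> W a c"
    | (3) "W a b \<le> W b c \<and> W a c \<le> W b c" by linarith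
  then show ?thesis
  proof cases
    case 1 then show ?thesis using tri_max[OF ab ac bc] by auto
  next
    case 2 then show ?thesis using tri_max[OF ac ab ed_sym[OF bc]] S by auto
  next
    case 3 then show ?thesis using tri_max[OF bc ed_sym[OF ab] ed_sym[OF ac]] S by auto
  qed
qed

lemma sameapex:
  assumes ab: "ed a b" and ac: "ed a c" and bc: "ed b c" and ad: "ed a d" and bd: "ed b d" and cd: "c \<noteq> d"
    and h: "s b a = 0" "s a c \<ge> W a b" "s c a \<ge> W b c" "s a d \<ge> W a b" "s d a \<ge> W b d" "s b c = 0" "s b d = 0"
  shows False
proof (cases "ed c d")
  case True
  have P: "W a b > 0" "W b c > 0" "W b d > 0" using edge[OF ab] edge[OF bc] edge[OF bd] by auto
  show False using tri3[OF ac ad True] h P by linarith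
next
  case False
  have P: "W b c > 0" "W b d > 0" using edge[OF bc] edge[OF bd] by auto
  show False using path'[OF bc bd False cd] s_sum[OF bc] h P by linarith
qed

lemma claimA:
  assumes ab: "ed a b" and ac: "ed a c" and bc: "ed b c" and ad: "ed a d" and bd: "ed b d" and cd: "c \<noteq> d"
  shows "W a c < W a b \<and> W b c < W a b \<and> W a d < W a b \<and> W b d < W a b"
proof -
  have N1: "\<not> (s b a = 0 \<and> s b c = 0 \<and> s a c \<ge> W a b \<and> s c a \<ge> W b c \<and> s b d = 0 \<and> s a d \<ge> W a b \<and> s d a \<ge> W b d)"
    using sameapex[OF ab ac bc ad bd cd] by blast
  have N2: "\<not> (s a b = 0 \<and> s a c = 0 \<and> s b c \<ge> W a b \<and> s c b \<ge> W a c \<and> s a d = 0 \<and> s b d \<ge> W a b \<and> s d b \<ge> W a d)"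
    using sameapex[OF ed_sym[OF ab] bc ac bd ad cd] W_sym[of b a] by auto
  have P: "W a b > 0" "W a c > 0" "W b c > 0" "W a d > 0" "W b d > 0"
    using edge[OF ab] edge[OF ac] edge[OF bc] edge[OF ad] edge[OF bd] by auto
  show ?thesis using tri3[OF ab ac bc] tri3[OF ab ad bd] N1 N2 P s_sum[OF ab] by linarith
qed

lemma tripos: assumes ab: "ed a b" and ac: "ed a c" and bc: "ed b c" shows "s b a > 0 \<or> s c a > 0"
  using tri3[OF ab ac bc] s_sum[OF ab] edge[OF ab] edge[OF bc] by linarith

lemma B_core:
  assumes ap: "ed a p" and ap': "ed a p'" and pp': "ed p p'" and aq: "ed a q" and aq': "ed a q'" and qq': "ed q q'"
    and d: "p \<noteq> q" "p \<noteq> q'" "p' \<noteq> q" and pos1: "s p a > 0" and pos2: "s q a > 0"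
  shows False
proof (cases "ed p q")
  case True
  have "W a q < W a p" using claimA[OF ap ap' pp' aq True d(3)] by blast
  moreover have "W a p < W a q" using claimA[OF aq aq' qq' ap ed_sym[OF True]] d(2) by auto
  ultimately show False by simp
next
  case False
  show False using path'[OF ap aq False d(1)] pos1 pos2 by linarith
qed

lemma claimB:
  assumes ab: "ed a b" and ac: "ed a c" and bc: "ed b c" and ad: "ed a d" and ae: "ed a e" and de: "ed d e"
    and d: "b \<noteq> d" "b \<noteq> e" "c \<noteq> d" "c \<noteq> e"
  shows False
proof -
  have cb: "ed c b" and ed': "ed e d" using ed_sym bc de by auto
  from tripos[OF ab ac bc] tripos[OF ad ae de] show False
    using B_core[OF ab ac bc ad ae de] B_core[OF ab ac bc ae ad ed']
      B_core[OF ac ab cb ad ae de] B_core[OF ac ab cb ae ad ed'] d by metis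
qed

lemma apexL:
  assumes uv: "ed u v" and uz: "ed u z" and vz: "ed v z" and lt1: "W u z < W u v" and lt2: "W v z < W u v"
    and zq: "ed z q"
  shows "q = u \<or> q = v"
proof (rule ccontr)
  assume nq: "\<not> (q = u \<or> q = v)"
  have z0: "s z u = 0" using tri_max[OF uv uz vz] lt1 lt2 by auto
  show False
  proof (cases "ed u q")
    case True
    have "W u v < W u z" using claimA[OF uz uv ed_sym[OF vz] True zq] nq by auto
    thus False using lt1 by simp
  next
    case False
    have "u \<noteq> q" using nq by auto
    from path'[OF ed_sym[OF uz] zq False this] s_sum[OF uz] z0 edge[OF zq] edge[OF uz] W_sym[of z u]
    show False by linarith
  qed
qed

lemma pendantL:
  assumes uv: "ed u v" and uz: "ed u z" and vz: "ed v z" and lt1: "W u z < W u v" and lt2: "W v z < W u v"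
    and uy: "ed u y" and yv: "y \<noteq> v" and nvy: "\<not> ed v y" and yq: "ed y q"
  shows "q = u"
proof (rule ccontr)
  assume qu: "q \<noteq> u"
  have sv: "s v u \<ge> W v z" using tri_max[OF uv uz vz] lt1 lt2 by auto
  have "W v z > 0" using edge[OF vz] by simp
  have sy0: "s y u = 0"
    using path'[OF uv uy nvy yv[symmetric]] sv \<open>W v z > 0\<close> s_nn[OF ed_sym[OF uy]] by linarith
  show False
  proof (cases "ed u q")
    case True
    have vq: "v \<noteq> q" using yq nvy ed_sym by blast
    have zy: "z \<noteq> y" using vz nvy by blast
    have zq: "z \<noteq> q"
    proof
      assume "z = q"
      hence "ed z y" using ed_sym[OF yq] by simp
      from apexL[OF uv uz vz lt1 lt2 this] show False using edge[OF uy] yv by auto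
    qed
    show False using claimB[OF uv uz vz uy True yq] yv vq zy zq by auto
  next
    case False
    from path'[OF ed_sym[OF uy] yq False qu[symmetric]] s_sum[OF uy] sy0 edge[OF yq] edge[OF uy] W_sym[of y u]
    show False by linarith
  qed
qed

lemma neighborL:
  assumes uv: "ed u v" and uz: "ed u z" and vz: "ed v z" and lt1: "W u z < W u v" and lt2: "W v z < W u v"
    and yu: "y \<noteq> u" and yv: "y \<noteq> v" and uy: "ed u y" and yq: "ed y q"
  shows "q = u \<or> q = v"
proof (cases "ed v y")
  case True
  show ?thesis
  proof (cases "y = z")
    case True
    then show ?thesis using apexL[OF uv uz vz lt1 lt2] yq by simp
  next
    case False
    have "W u y < W u v \<and> W v y < W u v" using claimA[OF uv uz vz uy True] False by auto
    then show ?thesis using apexL[OF uv uy True _ _ yq] by auto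
  qed
next
  case False
  then show ?thesis using pendantL[OF uv uz vz lt1 lt2 uy yv False yq] by simp
qed

lemma neighborL2:
  assumes uv: "ed u v" and uz: "ed u z" and vz: "ed v z" and lt1: "W u z < W u v" and lt2: "W v z < W u v"
    and yu: "y \<noteq> u" and yv: "y \<noteq> v" and uy: "ed u y \<or> ed v y" and yq: "ed y q"
  shows "q = u \<or> q = v"
  using uy
proof
  assume "ed u y" thus ?thesis using neighborL[OF uv uz vz lt1 lt2 yu yv _ yq] by simp
next
  assume vy: "ed v y"
  have "W v z < W v u" "W u z < W v u" using lt1 lt2 W_sym[of v u] by auto
  thus ?thesis using neighborL[OF ed_sym[OF uv] vz uz _ _ yv yu vy yq] by auto
qed


lemma tri_decomp: assumes "triangle V E t" shows "\<exists>a b c. t = {a,b,c} \<and> ed a b \<and> ed a c \<and> ed b c"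
proof -
  have c: "card t = 3" and p: "\<forall>u\<in>t. \<forall>v\<in>t. u \<noteq> v \<longrightarrow> {u, v} \<in> E" using assms by (simp_all add: triangle_def)
  obtain a b c where t: "t = {a,b,c}" "a \<noteq> b" "b \<noteq> c" "a \<noteq> c" using c by (meson card_3_iff)
  have "ed a b" "ed a c" "ed b c" using p t by simp_all
  thus ?thesis using t by blast
qed

lemma tri_at: assumes "triangle V E t" "a \<in> t" shows "\<exists>b c. t = {a,b,c} \<and> ed a b \<and> ed a c \<and> ed b c"
proof -
  obtain p q r where t: "t = {p,q,r}" and e: "ed p q" "ed p r" "ed q r" using tri_decomp[OF assms(1)] by blast
  have "a = p \<or> a = q \<or> a = r" using assms(2) t by simp
  thus ?thesis
  proof (elim disjE)
    assume "a = p" thus ?thesis using t e by blast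
  next
    assume "a = q"
    moreover have "t = {q,p,r}" using t by (simp add: insert_commute)
    ultimately show ?thesis using e ed_sym[OF e(1)] by blast
  next
    assume "a = r"
    moreover have "t = {r,p,q}" using t by (simp add: insert_commute)
    ultimately show ?thesis using e ed_sym[OF e(2)] ed_sym[OF e(3)] by blast
  qed
qed

lemma sm:
  assumes ab: "ed a b" and ac: "ed a c" and bc: "ed b c" and l1: "W a c < W a b" and l2: "W b c < W a b"
  shows "strict_max_edge {a,b,c} w {a,b}"
  unfolding strict_max_edge_def
proof (intro conjI allI impI)
  show "{a,b} \<subseteq> {a,b,c}" by simp
  show "card {a,b} = 2" using edge[OF ab] by simp
  fix f assume f: "f \<subseteq> {a,b,c} \<and> card f = 2 \<and> f \<noteq> {a,b}"
  hence "f = {a,c} \<or> f = {b,c}" using two_subsets[of f a b c] by blast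
  thus "w f < W a b" using l1 l2 by (elim disjE) simp_all
qed

lemma sm_unique: assumes "strict_max_edge t w e" "strict_max_edge t w f" shows "e = f"
proof (rule ccontr)
  assume ne: "e \<noteq> f"
  have "w f < w e" using assms(1) assms(2) ne unfolding strict_max_edge_def by blast
  moreover have "w e < w f" using assms(1) assms(2) ne unfolding strict_max_edge_def by blast
  ultimately show False by simp
qed

lemma shareAB:
  assumes ab: "ed a b" and ac: "ed a c" and bc: "ed b c" and ag: "ed a g" and bg: "ed b g" and cg: "c \<noteq> g"
  shows "\<exists>f\<in>E. f \<subseteq> {a,b,c} \<inter> {a,b,g} \<and> strict_max_edge {a,b,c} w f \<and> strict_max_edge {a,b,g} w f"
proof (rule bexI[of _ "{a,b}"])
  have "W a c < W a b \<and> W b c < W a b \<and> W a g < W a b \<and> W b g < W a b" using claimA[OF ab ac bc ag bg cg] .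
  thus "{a,b} \<subseteq> {a,b,c} \<inter> {a,b,g} \<and> strict_max_edge {a,b,c} w {a,b} \<and> strict_max_edge {a,b,g} w {a,b}"
    using sm[OF ab ac bc] sm[OF ab ag bg] by simp
qed (rule ab)

lemma partA:
  assumes t1: "triangle V E t1" and t2: "triangle V E t2" and ne: "t1 \<noteq> t2" and int: "t1 \<inter> t2 \<noteq> {}"
  shows "\<exists>f\<in>E. f \<subseteq> t1 \<inter> t2 \<and> strict_max_edge t1 w f \<and> strict_max_edge t2 w f"
proof -
  obtain a where a: "a \<in> t1" "a \<in> t2" using int by blast
  obtain b c where T1: "t1 = {a,b,c}" and ab: "ed a b" and ac: "ed a c" and bc: "ed b c" using tri_at[OF t1 a(1)] by blast
  obtain d g where T2: "t2 = {a,d,g}" and ad: "ed a d" and ag: "ed a g" and dg: "ed d g" using tri_at[OF t2 a(2)] by blast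
  have cb: "ed c b" and gd: "ed g d" using bc dg ed_sym by auto
  have s1: "t1 = {a,c,b}" using T1 by (simp add: insert_commute)
  have s2: "t2 = {a,g,d}" using T2 by (simp add: insert_commute)
  consider "d = b" | "d = c" | "g = b" | "g = c" | "d \<noteq> b" "d \<noteq> c" "g \<noteq> b" "g \<noteq> c" by blast
  then show ?thesis
  proof cases
    case 1
    have "c \<noteq> g" using ne T1 T2 1 by auto
    then show ?thesis using shareAB[OF ab ac bc ag] dg T1 T2 1 by simp
  next
    case 2
    have "b \<noteq> g" using ne s1 T2 2 by auto
    then show ?thesis using shareAB[OF ac ab cb ag] dg s1 T2 2 by simp
  next
    case 3
    have "c \<noteq> d" using ne T1 s2 3 by auto
    then show ?thesis using shareAB[OF ab ac bc ad] gd T1 s2 3 by simp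
  next
    case 4
    have "b \<noteq> d" using ne s1 s2 4 by auto
    then show ?thesis using shareAB[OF ac ab cb ad] gd s1 s2 4 by simp
  next
    case 5
    have False using claimB[OF ab ac bc ad ag dg] 5 by auto
    thus ?thesis ..
  qed
qed

lemma tri_strict: assumes "triangle V E t"
  shows "\<exists>u v z. t = {u,v,z} \<and> ed u v \<and> ed u z \<and> ed v z \<and> W u z < W u v \<and> W v z < W u v"
proof -
  obtain a b c where t: "t = {a,b,c}" and ab: "ed a b" and ac: "ed a c" and bc: "ed b c" using tri_decomp[OF assms] by blast
  have S: "W c b = W b c" "W b a = W a b" "W c a = W a c" by (simp_all only: W_sym)
  have t2: "t = {a,c,b}" "t = {b,c,a}" using t by (simp_all add: insert_commute)
  from tri3[OF ab ac bc] show ?thesis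
  proof (elim disjE)
    assume "s c a = 0 \<and> s c b = 0 \<and> s a b \<ge> W a c \<and> s b a \<ge> W b c \<and> W a c < W a b \<and> W b c < W a b"
    thus ?thesis using t ab ac bc by blast
  next
    assume "s b a = 0 \<and> s b c = 0 \<and> s a c \<ge> W a b \<and> s c a \<ge> W b c \<and> W a b < W a c \<and> W b c < W a c"
    hence "W a b < W a c" "W c b < W a c" using S by auto
    thus ?thesis using t2(1) ab ac ed_sym[OF bc] by blast
  next
    assume "s a b = 0 \<and> s a c = 0 \<and> s b c \<ge> W a b \<and> s c b \<ge> W a c \<and> W a b < W b c \<and> W a c < W b c"
    hence "W b a < W b c" "W c a < W b c" using S by auto
    thus ?thesis using t2(2) bc ed_sym[OF ab] ed_sym[OF ac] by blast
  qed
qed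

lemma partB:
  assumes conn: "connected_graph V E" and t1: "triangle V E t1" and t2: "triangle V E t2"
  shows "t1 \<inter> t2 \<noteq> {}"
proof -
  obtain u v z where T1: "t1 = {u,v,z}" and uv: "ed u v" and uz: "ed u z" and vz: "ed v z"
    and lt1: "W u z < W u v" and lt2: "W v z < W u v" using tri_strict[OF t1] by blast
  define C where "C = {r. r = u \<or> r = v \<or> ed u r \<or> ed v r}"
  have nb: "q = u \<or> q = v" if "r \<noteq> u" "r \<noteq> v" "ed u r \<or> ed v r" "ed r q" for r q
    using neighborL2[OF uv uz vz lt1 lt2 that] .
  have clos: "q \<in> C" if rC: "r \<in> C" and rq: "ed r q" for r q
  proof -
    consider "r = u" | "r = v" | "r \<noteq> u" "r \<noteq> v" "ed u r \<or> ed v r" using rC C_def by blast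
    thus ?thesis
    proof cases
      case 1 thus ?thesis using rq C_def by simp
    next
      case 2 thus ?thesis using rq C_def by simp
    next
      case 3 thus ?thesis using nb[OF 3 rq] C_def by auto
    qed
  qed
  have reach: "r \<in> C" if "(u, r) \<in> (adj E)\<^sup>*" for r
    using that
  proof (induction rule: rtrancl_induct)
    case base thus ?case using C_def by simp
  next
    case (step y q)
    hence "ed y q" by (simp add: adj_def)
    thus ?case using clos step.IH by blast
  qed
  have uV: "u \<in> V" using edge[OF uv] by simp
  have allC: "r \<in> C" if "r \<in> V" for r using reach conn uV that unfolding connected_graph_def by blast
  obtain p q r where T2: "t2 = {p,q,r}" and pq: "ed p q" using tri_decomp[OF t2] by blast
  have pC: "p \<in> C" using allC edge[OF pq] by blast
  show ?thesis
  proof (cases "p = u \<or> p = v")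
    case True thus ?thesis using T1 T2 by auto
  next
    case False
    hence "ed u p \<or> ed v p" using pC C_def by auto
    hence "q = u \<or> q = v" using nb False pq by blast
    thus ?thesis using T1 T2 by auto
  qed
qed

end

theorem mainTheorem13:
  fixes V :: "'a set" and E :: "'a set set" and w :: "'a set \<Rightarrow> real"
  assumes "simple_graph V E"
    and "\<forall>e\<in>E. w e > 0"
    and "connected_graph V E"
    and "population_monotonic V E w"
  shows "(\<forall>t1 t2. triangle V E t1 \<and> triangle V E t2 \<and> t1 \<noteq> t2 \<and> t1 \<inter> t2 \<noteq> {} \<longrightarrow>
            (\<exists>e\<in>E. e \<subseteq> t1 \<inter> t2 \<and> strict_max_edge t1 w e \<and> strict_max_edge t2 w e))
       \<and> (\<forall>t1 t2. triangle V E t1 \<and> triangle V E t2 \<longrightarrow> t1 \<inter> t2 \<noteq> {})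
       \<and> ((\<exists>t. triangle V E t) \<longrightarrow>
            (\<exists>e\<in>E. \<forall>t. triangle V E t \<longrightarrow> e \<subseteq> t \<and> strict_max_edge t w e))"
proof -
  obtain x where x: "is_PMAS V E w x" using assms(4) unfolding population_monotonic_def by blast
  have I: "pm V E w x" using assms(1,2) x by (simp add: pm_def)
  interpret pm V E w x by (rule I)
  have A: "\<forall>t1 t2. triangle V E t1 \<and> triangle V E t2 \<and> t1 \<noteq> t2 \<and> t1 \<inter> t2 \<noteq> {} \<longrightarrow>
            (\<exists>e\<in>E. e \<subseteq> t1 \<inter> t2 \<and> strict_max_edge t1 w e \<and> strict_max_edge t2 w e)"
    using partA by blast
  have B: "\<forall>t1 t2. triangle V E t1 \<and> triangle V E t2 \<longrightarrow> t1 \<inter> t2 \<noteq> {}"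
    using partB[OF assms(3)] by blast
  have C: "\<exists>e\<in>E. \<forall>t. triangle V E t \<longrightarrow> e \<subseteq> t \<and> strict_max_edge t w e" if ex: "\<exists>t. triangle V E t"
  proof -
    obtain t0 where t0: "triangle V E t0" using ex by blast
    obtain u v z where T0: "t0 = {u,v,z}" and uv: "ed u v" and uz: "ed u z" and vz: "ed v z"
      and lt1: "W u z < W u v" and lt2: "W v z < W u v" using tri_strict[OF t0] by blast
    have sm0: "strict_max_edge t0 w {u,v}" using sm[OF uv uz vz lt1 lt2] T0 by simp
    have "{u,v} \<subseteq> t \<and> strict_max_edge t w {u,v}" if t: "triangle V E t" for t
    proof (cases "t = t0")
      case True thus ?thesis using sm0 T0 by simp
    next
      case False
      have "t \<inter> t0 \<noteq> {}" using partB[OF assms(3) t t0] .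
      then obtain f where f: "f \<subseteq> t \<inter> t0" "strict_max_edge t w f" "strict_max_edge t0 w f"
        using partA[OF t t0 False] by blast
      have "f = {u,v}" using sm_unique[OF f(3) sm0] .
      thus ?thesis using f by auto
    qed
    thus ?thesis using uv by blast
  qed
  show ?thesis using A B C by blast
qed

end
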